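(* Let $S$ be a Damek–Ricci space with $\mathfrak{s}=\mathfrak{a}\oplus\mathfrak{v}\oplus\mathfrak{z}$. Let $\Sigma$ be a totally geodesic subgroup of $S$ with $T_e\Sigma=\mathfrak{a}\oplus\mathfrak{v}'\oplus\mathfrak{z}'$, where $\mathfrak{v}'\subseteq\mathfrak{v}$ and $\mathfrak{z}'\subseteq\mathfrak{z}$. Let $H$ be a closed subgroup of $S$ whose Lie algebra $\mathfrak{h}$ is orthogonal to $T_e\Sigma$, and let $\eta$ be a Killing vector field induced by the action of $H$ on $S$ by left translations. Write $\eta(e)=X+U$ with $U\in\mathfrak{v}$, $X\in\mathfrak{z}$. Then the following are equivalent: (i) $\langle\nabla_v\eta,w\rangle=0$ for all $v,w\in T_e\Sigma$; (ii) $J_X\mathfrak{v}'\perp\mathfrak{v}'$.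
   Context: Damek–Ricci space: let $\mathfrak{n}=\mathfrak{v}\oplus\mathfrak{z}$ be a real Lie algebra with inner product $\langle\cdot,\cdot\rangle$ such that $\mathfrak{v}\perp\mathfrak{z}$, $[\mathfrak{v},\mathfrak{v}]\subseteq\mathfrak{z}$, $[\mathfrak{v},\mathfrak{z}]=[\mathfrak{z},\mathfrak{z}]=0$; define $J_Z\in\mathrm{End}(\mathfrak{v})$ for $Z\in\mathfrak{z}$ by $\langle J_ZU,V\rangle=\langle[U,V],Z\rangle$, and assume $J_Z^2=-\langle Z,Z\rangle\mathrm{id}_{\mathfrak{v}}$. Let $\mathfrak{a}=\mathbb{R}A$, $\mathfrak{s}=\mathfrak{a}\oplus\mathfrak{n}$ with $[A,U]=\tfrac12U$ ($U\in\mathfrak{v}$), $[A,X]=X$ ($X\in\mathfrak{z}$), inner product extended with $A$ a unit vector orthogonal to $\mathfrak{n}$. $S$ is the simply connected Lie group with Lie algebra $\mathfrak{s}$ with the induced left-invariant metric, identity $e$, $T_eS=\mathfrak{s}$, Levi-Civita connection $\nabla$. The Killing field induced by $Y\in\mathfrak{h}$ under left translations is $p\mapsto\frac{d}{dt}\big|_{t=0}\exp(tY)p$ (the right-invariant extension of $Y$). *)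

theory Defs
  imports "HOL-Analysis.Analysis"
begin

text \<open>Damek-Ricci data: v and z are finite-dimensional inner product spaces (types 'v, 'z),
  br U V is the bracket [U,V] in z of U,V in v. The Lie algebra s = a + v + z and the
  group S are both modelled on real * 'v * 'z: the tangent vector (a,U,X) at e is aA+U+X;
  the point (t,V,Z) is the group element exp(V+Z) exp(tA) (S = N semidirect A).\<close>

definition J :: "('v::real_inner \<Rightarrow> 'v \<Rightarrow> 'z::real_inner) \<Rightarrow> 'z \<Rightarrow> 'v \<Rightarrow> 'v" where
  "J br Z U = (THE W. \<forall>V. inner W V = inner (br U V) Z)"

definition damek_ricci :: "('v::euclidean_space \<Rightarrow> 'v \<Rightarrow> 'z::euclidean_space) \<Rightarrow> bool" where
  "damek_ricci br \<longleftrightarrow> bilinear br \<and> (\<forall>U V. br U V = - br V U) \<and>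
     (\<forall>Z U. J br Z (J br Z U) = - (inner Z Z) *\<^sub>R U)"

type_synonym ('v, 'z) drpt = "real \<times> 'v \<times> 'z"

definition dr_e :: "('v::real_vector, 'z::real_vector) drpt" where
  "dr_e = (0, 0, 0)"

definition dr_mult :: "('v::real_vector \<Rightarrow> 'v \<Rightarrow> 'z::real_vector) \<Rightarrow> ('v,'z) drpt \<Rightarrow> ('v,'z) drpt \<Rightarrow> ('v,'z) drpt" where
  "dr_mult br p q = (case p of (t, V, Z) \<Rightarrow> case q of (t', V', Z') \<Rightarrow>
      (t + t', V + exp (t/2) *\<^sub>R V', Z + exp t *\<^sub>R Z' + (1/2) *\<^sub>R br V (exp (t/2) *\<^sub>R V')))"

definition dr_inv :: "('v::real_vector, 'z::real_vector) drpt \<Rightarrow> ('v,'z) drpt" where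
  "dr_inv p = (case p of (t, V, Z) \<Rightarrow> (- t, - (exp (- t/2) *\<^sub>R V), - (exp (- t) *\<^sub>R Z)))"

definition dr_metric :: "('v::real_inner \<Rightarrow> 'v \<Rightarrow> 'z::real_inner) \<Rightarrow> ('v,'z) drpt \<Rightarrow> ('v,'z) drpt \<Rightarrow> ('v,'z) drpt \<Rightarrow> real" where
  "dr_metric br p \<xi> \<zeta> =
     inner (frechet_derivative (dr_mult br (dr_inv p)) (at p) \<xi>)
           (frechet_derivative (dr_mult br (dr_inv p)) (at p) \<zeta>)"

text \<open>Christoffel symbols of the Levi-Civita connection in the global chart (Koszul formula).\<close>
definition dr_Gamma :: "('v::real_inner \<Rightarrow> 'v \<Rightarrow> 'z::real_inner) \<Rightarrow> ('v,'z) drpt \<Rightarrow> ('v,'z) drpt \<Rightarrow> ('v,'z) drpt \<Rightarrow> ('v,'z) drpt" where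
  "dr_Gamma br p u w = (THE c. \<forall>y. dr_metric br p c y =
      (frechet_derivative (\<lambda>q. dr_metric br q w y) (at p) u
     + frechet_derivative (\<lambda>q. dr_metric br q u y) (at p) w
     - frechet_derivative (\<lambda>q. dr_metric br q u w) (at p) y) / 2)"

definition dr_cov :: "('v::real_inner \<Rightarrow> 'v \<Rightarrow> 'z::real_inner) \<Rightarrow> ('v,'z) drpt \<Rightarrow> ('v,'z) drpt \<Rightarrow> (('v,'z) drpt \<Rightarrow> ('v,'z) drpt) \<Rightarrow> ('v,'z) drpt" where
  "dr_cov br p v Y = frechet_derivative Y (at p) v + dr_Gamma br p v (Y p)"

definition dr_geodesic :: "('v::real_inner \<Rightarrow> 'v \<Rightarrow> 'z::real_inner) \<Rightarrow> (real \<Rightarrow> ('v,'z) drpt) \<Rightarrow> (real \<Rightarrow> ('v,'z) drpt) \<Rightarrow> bool" where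
  "dr_geodesic br \<gamma> \<gamma>' \<longleftrightarrow> (\<forall>t. (\<gamma> has_vector_derivative \<gamma>' t) (at t)) \<and>
     (\<forall>t. (\<gamma>' has_vector_derivative (- dr_Gamma br (\<gamma> t) (\<gamma>' t) (\<gamma>' t))) (at t))"

definition tangent_set :: "('a::real_normed_vector) set \<Rightarrow> 'a \<Rightarrow> 'a set" where
  "tangent_set M p = {v. \<exists>\<gamma>. (\<forall>t. \<gamma> t \<in> M) \<and> \<gamma> 0 = p \<and> (\<gamma> has_vector_derivative v) (at 0)}"

definition dr_subgroup :: "('v::real_vector \<Rightarrow> 'v \<Rightarrow> 'z::real_vector) \<Rightarrow> ('v,'z) drpt set \<Rightarrow> bool" where
  "dr_subgroup br M \<longleftrightarrow> dr_e \<in> M \<and> (\<forall>p\<in>M. \<forall>q\<in>M. dr_mult br p q \<in> M) \<and> (\<forall>p\<in>M. dr_inv p \<in> M)"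

text \<open>Totally geodesic (S is complete): every geodesic tangent to M at a point of M stays in M.\<close>
definition dr_totally_geodesic :: "('v::real_inner \<Rightarrow> 'v \<Rightarrow> 'z::real_inner) \<Rightarrow> ('v,'z) drpt set \<Rightarrow> bool" where
  "dr_totally_geodesic br M \<longleftrightarrow> (\<forall>\<gamma> \<gamma>'. dr_geodesic br \<gamma> \<gamma>' \<and> \<gamma> 0 \<in> M \<and> \<gamma>' 0 \<in> tangent_set M (\<gamma> 0)
      \<longrightarrow> (\<forall>t. \<gamma> t \<in> M))"

text \<open>Killing field induced by Y under left translations: p \<mapsto> d/dt exp(tY) p = (dR_p)_e Y.\<close>
definition dr_killing :: "('v::real_normed_vector \<Rightarrow> 'v \<Rightarrow> 'z::real_normed_vector) \<Rightarrow> ('v,'z) drpt \<Rightarrow> ('v,'z) drpt \<Rightarrow> ('v,'z) drpt" where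
  "dr_killing br Y p = frechet_derivative (\<lambda>q. dr_mult br q p) (at dr_e) Y"

end

theory Submission
  imports Defs
begin

definition gw :: "real \<Rightarrow> real \<Rightarrow> real" where "gw k s = ((1+k) * cosh s + (1-k))/2"
definition gal :: "real \<Rightarrow> real \<Rightarrow> real" where "gal k s = sinh s / gw k s"
definition gbe :: "real \<Rightarrow> real \<Rightarrow> real" where "gbe k s = (cosh s - 1) / gw k s"
definition gT1 :: "real \<Rightarrow> real \<Rightarrow> real" where "gT1 k s = -(1+k) * sinh s / (2 * gw k s)"
definition gA1 :: "real \<Rightarrow> real \<Rightarrow> real" where "gA1 k s = ((1+k) + (1-k) * cosh s) / (2 * (gw k s)^2)"
definition gB1 :: "real \<Rightarrow> real \<Rightarrow> real" where "gB1 k s = sinh s / (gw k s)^2"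
definition gT2 :: "real \<Rightarrow> real \<Rightarrow> real" where
  "gT2 k s = -(1+k) * ((1+k) + (1-k) * cosh s) / (4 * (gw k s)^2)"
definition gA2 :: "real \<Rightarrow> real \<Rightarrow> real" where
  "gA2 k s = sinh s * ((1-k) * gw k s - (1+k) * ((1+k) + (1-k) * cosh s)) / (2 * (gw k s)^3)"
definition gB2 :: "real \<Rightarrow> real \<Rightarrow> real" where
  "gB2 k s = (cosh s * gw k s - (1+k) * (sinh s)^2) / (gw k s)^3"

lemma gw_pos: "0 \<le> k \<Longrightarrow> gw k s \<ge> 1"
proof -
  assume k: "0 \<le> k"
  have "cosh s \<ge> 1" by (rule cosh_real_ge_1)
  then have "(1+k) * cosh s \<ge> (1+k) * 1" using k by (intro mult_left_mono) auto
  then show ?thesis unfolding gw_def by (simp add: field_simps)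
qed

lemma gw_deriv: "((gw k) has_real_derivative ((1+k) * sinh s / 2)) (at s)"
  unfolding gw_def[abs_def] by (rule derivative_eq_intros refl | simp)+

lemma u_forms:
  fixes s k u q :: real
  assumes u_def: "u = exp s" and q_def: "q = (1+k)*u*u + 2*(1-k)*u + (1+k)"
  shows "cosh s = (u*u+1)/(2*u)" "sinh s = (u*u-1)/(2*u)" "gw k s = q/(4*u)"
proof -
  have u: "u > 0" "exp (-s) = 1/u" unfolding u_def by (simp_all add: exp_minus field_simps)
  show c: "cosh s = (u*u+1)/(2*u)" unfolding cosh_def using u by (simp add: u_def[symmetric] field_simps)
  show "sinh s = (u*u-1)/(2*u)" unfolding sinh_def using u by (simp add: u_def[symmetric] field_simps)
  show "gw k s = q/(4*u)" unfolding gw_def c q_def using u by (simp add: field_simps)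
qed


lemma d_t: "0 \<le> k \<Longrightarrow> ((\<lambda>s. - ln (gw k s)) has_real_derivative gT1 k s) (at s)"
proof -
  assume k: "0 \<le> k"
  have p: "gw k s > 0" using gw_pos[OF k, of s] by simp
  show ?thesis unfolding gT1_def
    by (rule derivative_eq_intros gw_deriv refl | simp add: p)+ (simp add: field_simps minus_divide_left)
qed

lemma d_al: "0 \<le> k \<Longrightarrow> ((gal k) has_real_derivative gA1 k s) (at s)"
proof -
  assume k: "0 \<le> k"
  define u where "u = exp s"
  define q where "q = (1+k)*u*u + 2*(1-k)*u + (1+k)"
  have p: "gw k s > 0" using gw_pos[OF k, of s] by simp
  have pne: "gw k s \<noteq> 0" using p by simp
  have up: "u > 0" unfolding u_def by simp
  have uf: "cosh s = (u*u+1)/(2*u)" "sinh s = (u*u-1)/(2*u)" "gw k s = q/(4*u)"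
    using u_forms[OF u_def q_def] by auto
  have qp: "q > 0" using p up uf(3) by (simp add: field_simps)
  have une: "u \<noteq> 0" and qne: "q \<noteq> 0" using up qp by auto
  show ?thesis unfolding gA1_def gal_def[abs_def]
    apply (rule derivative_eq_intros gw_deriv refl)+
    apply (simp_all add: pne)
    unfolding uf apply (simp add: field_simps une qne)
    unfolding q_def by algebra
qed

lemma d_be: "0 \<le> k \<Longrightarrow> ((gbe k) has_real_derivative gB1 k s) (at s)"
proof -
  assume k: "0 \<le> k"
  define u where "u = exp s"
  define q where "q = (1+k)*u*u + 2*(1-k)*u + (1+k)"
  have p: "gw k s > 0" using gw_pos[OF k, of s] by simp
  have pne: "gw k s \<noteq> 0" using p by simp
  have up: "u > 0" unfolding u_def by simp
  have uf: "cosh s = (u*u+1)/(2*u)" "sinh s = (u*u-1)/(2*u)" "gw k s = q/(4*u)"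
    using u_forms[OF u_def q_def] by auto
  have qp: "q > 0" using p up uf(3) by (simp add: field_simps)
  have une: "u \<noteq> 0" and qne: "q \<noteq> 0" using up qp by auto
  show ?thesis unfolding gB1_def gbe_def[abs_def]
    apply (rule derivative_eq_intros gw_deriv refl)+
    apply (simp_all add: pne)
    unfolding uf apply (simp add: field_simps une qne)
    unfolding q_def by algebra
qed

lemma d_T1: "0 \<le> k \<Longrightarrow> ((gT1 k) has_real_derivative gT2 k s) (at s)"
proof -
  assume k: "0 \<le> k"
  define u where "u = exp s"
  define q where "q = (1+k)*u*u + 2*(1-k)*u + (1+k)"
  have p: "gw k s > 0" using gw_pos[OF k, of s] by simp
  have pne: "gw k s \<noteq> 0" using p by simp
  have up: "u > 0" unfolding u_def by simp
  have uf: "cosh s = (u*u+1)/(2*u)" "sinh s = (u*u-1)/(2*u)" "gw k s = q/(4*u)"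
    using u_forms[OF u_def q_def] by auto
  have qp: "q > 0" using p up uf(3) by (simp add: field_simps)
  have une: "u \<noteq> 0" and qne: "q \<noteq> 0" using up qp by auto
  show ?thesis unfolding gT2_def gT1_def[abs_def]
    apply (rule derivative_eq_intros gw_deriv refl)+
    apply (simp_all add: pne)
    unfolding uf apply (simp add: field_simps une qne)
    unfolding q_def by algebra
qed

lemma d_A1: "0 \<le> k \<Longrightarrow> ((gA1 k) has_real_derivative gA2 k s) (at s)"
proof -
  assume k: "0 \<le> k"
  define u where "u = exp s"
  define q where "q = (1+k)*u*u + 2*(1-k)*u + (1+k)"
  have p: "gw k s > 0" using gw_pos[OF k, of s] by simp
  have pne: "gw k s \<noteq> 0" using p by simp
  have up: "u > 0" unfolding u_def by simp
  have uf: "cosh s = (u*u+1)/(2*u)" "sinh s = (u*u-1)/(2*u)" "gw k s = q/(4*u)"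
    using u_forms[OF u_def q_def] by auto
  have qp: "q > 0" using p up uf(3) by (simp add: field_simps)
  have une: "u \<noteq> 0" and qne: "q \<noteq> 0" using up qp by auto
  show ?thesis unfolding gA2_def gA1_def[abs_def]
    apply (rule derivative_eq_intros gw_deriv refl)+
    apply (simp_all add: pne)
    unfolding uf apply (simp add: field_simps une qne)
    unfolding q_def by algebra
qed

lemma d_B1: "0 \<le> k \<Longrightarrow> ((gB1 k) has_real_derivative gB2 k s) (at s)"
proof -
  assume k: "0 \<le> k"
  define u where "u = exp s"
  define q where "q = (1+k)*u*u + 2*(1-k)*u + (1+k)"
  have p: "gw k s > 0" using gw_pos[OF k, of s] by simp
  have pne: "gw k s \<noteq> 0" using p by simp
  have up: "u > 0" unfolding u_def by simp
  have uf: "cosh s = (u*u+1)/(2*u)" "sinh s = (u*u-1)/(2*u)" "gw k s = q/(4*u)"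
    using u_forms[OF u_def q_def] by auto
  have qp: "q > 0" using p up uf(3) by (simp add: field_simps)
  have une: "u \<noteq> 0" and qne: "q \<noteq> 0" using up qp by auto
  show ?thesis unfolding gB2_def gB1_def[abs_def]
    apply (rule derivative_eq_intros gw_deriv refl)+
    apply (simp_all add: pne)
    unfolding uf apply (simp add: field_simps une qne)
    unfolding q_def by algebra
qed

lemma Zid: "0 \<le> k \<Longrightarrow> gw k s * (gA1 k s - (1/2) * (gal k s * gB1 k s - gbe k s * gA1 k s) * (1-k)) = 1 / gw k s"
proof -
  assume k: "0 \<le> k"
  define u where "u = exp s"
  define q where "q = (1+k)*u*u + 2*(1-k)*u + (1+k)"
  have p: "gw k s > 0" using gw_pos[OF k, of s] by simp
  have pne: "gw k s \<noteq> 0" using p by simp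
  have up: "u > 0" unfolding u_def by simp
  have uf: "cosh s = (u*u+1)/(2*u)" "sinh s = (u*u-1)/(2*u)" "gw k s = q/(4*u)"
    using u_forms[OF u_def q_def] by auto
  have qp: "q > 0" using p up uf(3) by (simp add: field_simps)
  have une: "u \<noteq> 0" and qne: "q \<noteq> 0" using up qp by auto
  show ?thesis unfolding gal_def gbe_def gA1_def gB1_def
    unfolding uf apply (simp add: field_simps une qne)
    unfolding q_def by algebra
qed

lemma I1: "0 \<le> k \<Longrightarrow> - gT2 k s = (1/2) * (1-k) * gw k s * ((gA1 k s)^2 + k * (gB1 k s)^2) + k / (gw k s)^2"
proof -
  assume k: "0 \<le> k"
  define u where "u = exp s"
  define q where "q = (1+k)*u*u + 2*(1-k)*u + (1+k)"
  have p: "gw k s > 0" using gw_pos[OF k, of s] by simp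
  have pne: "gw k s \<noteq> 0" using p by simp
  have up: "u > 0" unfolding u_def by simp
  have uf: "cosh s = (u*u+1)/(2*u)" "sinh s = (u*u-1)/(2*u)" "gw k s = q/(4*u)"
    using u_forms[OF u_def q_def] by auto
  have qp: "q > 0" using p up uf(3) by (simp add: field_simps)
  have une: "u \<noteq> 0" and qne: "q \<noteq> 0" using up qp by auto
  show ?thesis unfolding gT2_def gA1_def gB1_def
    unfolding uf apply (simp add: field_simps une qne)
    unfolding q_def by algebra
qed

lemma I2: "0 \<le> k \<Longrightarrow> gA2 k s = gT1 k s * gA1 k s - k * gB1 k s / gw k s"
proof -
  assume k: "0 \<le> k"
  define u where "u = exp s"
  define q where "q = (1+k)*u*u + 2*(1-k)*u + (1+k)"
  have p: "gw k s > 0" using gw_pos[OF k, of s] by simp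
  have pne: "gw k s \<noteq> 0" using p by simp
  have up: "u > 0" unfolding u_def by simp
  have uf: "cosh s = (u*u+1)/(2*u)" "sinh s = (u*u-1)/(2*u)" "gw k s = q/(4*u)"
    using u_forms[OF u_def q_def] by auto
  have qp: "q > 0" using p up uf(3) by (simp add: field_simps)
  have une: "u \<noteq> 0" and qne: "q \<noteq> 0" using up qp by auto
  show ?thesis unfolding gA2_def gT1_def gA1_def gB1_def
    unfolding uf apply (simp add: field_simps une qne)
    unfolding q_def by algebra
qed

lemma I3: "0 \<le> k \<Longrightarrow> gB2 k s = gT1 k s * gB1 k s + gA1 k s / gw k s"
proof -
  assume k: "0 \<le> k"
  define u where "u = exp s"
  define q where "q = (1+k)*u*u + 2*(1-k)*u + (1+k)"
  have p: "gw k s > 0" using gw_pos[OF k, of s] by simp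
  have pne: "gw k s \<noteq> 0" using p by simp
  have up: "u > 0" unfolding u_def by simp
  have uf: "cosh s = (u*u+1)/(2*u)" "sinh s = (u*u-1)/(2*u)" "gw k s = q/(4*u)"
    using u_forms[OF u_def q_def] by auto
  have qp: "q > 0" using p up uf(3) by (simp add: field_simps)
  have une: "u \<noteq> 0" and qne: "q \<noteq> 0" using up qp by auto
  show ?thesis unfolding gB2_def gT1_def gA1_def gB1_def
    unfolding uf apply (simp add: field_simps une qne)
    unfolding q_def by algebra
qed

lemma I4: "0 \<le> k \<Longrightarrow> gw k s * (gA2 k s - (1/2) * (gal k s * gB2 k s - gbe k s * gA2 k s) * (1-k)) = 2 * gT1 k s / gw k s"
proof -
  assume k: "0 \<le> k"
  have p: "gw k s > 0" using gw_pos[OF k, of s] by simp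
  define F where "F = (\<lambda>s. gA1 k s - (1/2) * (1-k) * (gal k s * gB1 k s - gbe k s * gA1 k s))"
  have FF: "F = (\<lambda>s. 1 / (gw k s)^2)"
  proof
    fix s
    have p: "gw k s > 0" using gw_pos[OF k, of s] by simp
    have "gw k s * F s = 1 / gw k s" using Zid[OF k, of s] unfolding F_def by (simp add: algebra_simps)
    then show "F s = 1 / (gw k s)^2" using p by (simp add: field_simps power2_eq_square)
  qed
  have d1: "(F has_real_derivative (gA2 k s - (1/2) * (1-k) * (gA1 k s * gB1 k s + gal k s * gB2 k s
      - (gB1 k s * gA1 k s + gbe k s * gA2 k s)))) (at s)"
    unfolding F_def
    by (rule derivative_eq_intros d_al[OF k] d_be[OF k] d_A1[OF k] d_B1[OF k] refl)+ simp
  have d2: "(F has_real_derivative (- (2 * ((1+k) * sinh s / 2) * gw k s) / (gw k s ^ 2)^2)) (at s)"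
    unfolding FF
    apply (rule derivative_eq_intros gw_deriv refl)+
    using p by (simp_all add: power2_eq_square)
  have e: "gA2 k s - (1/2) * (1-k) * (gA1 k s * gB1 k s + gal k s * gB2 k s
      - (gB1 k s * gA1 k s + gbe k s * gA2 k s)) = - (2 * ((1+k) * sinh s / 2) * gw k s) / (gw k s ^ 2)^2"
    by (rule DERIV_unique[OF d1 d2])
  have r: "- (2 * ((1+k) * sinh s / 2) * gw k s) / (gw k s ^ 2)^2 = -(1+k)* sinh s / gw k s ^ 3"
    using p by (simp add: field_simps power2_eq_square power3_eq_cube)
  have l: "gA2 k s - (1/2) * (1-k) * (gA1 k s * gB1 k s + gal k s * gB2 k s
      - (gB1 k s * gA1 k s + gbe k s * gA2 k s)) = gA2 k s - (1/2) * (gal k s * gB2 k s - gbe k s * gA2 k s) * (1-k)"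
    by (simp add: algebra_simps)
  have X: "gA2 k s - (1/2) * (gal k s * gB2 k s - gbe k s * gA2 k s) * (1-k) = -(1+k)* sinh s / gw k s ^ 3"
    using e l r by simp
  show ?thesis unfolding X gT1_def using p by (simp add: field_simps power3_eq_cube)
qed

locale DRL =
  fixes br :: "'v::euclidean_space \<Rightarrow> 'v \<Rightarrow> 'z::euclidean_space"
  assumes DR: "damek_ricci br"
begin

lemma bil: "bilinear br" using DR unfolding damek_ricci_def by blast
lemma bbil: "bounded_bilinear br" using bil bilinear_conv_bounded_bilinear by blast
lemma anti: "br U V = - br V U" using DR unfolding damek_ricci_def by blast
lemma JJ: "J br Z (J br Z U) = - (inner Z Z) *\<^sub>R U" using DR unfolding damek_ricci_def by blast

interpretation B: bounded_bilinear br by (rule bbil)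

lemma br_self[simp]: "br U U = 0"
proof -
  have "br U U + br U U = 0" using anti[of U U] by (simp add: eq_neg_iff_add_eq_0)
  then have "2 *\<^sub>R br U U = 0" by (simp add: scaleR_2)
  then show ?thesis by simp
qed

lemma J_inner: "inner (J br Z U) V = inner (br U V) Z"
proof -
  let ?W = "\<Sum>b\<in>Basis. inner (br U b) Z *\<^sub>R b"
  have ex: "\<forall>V. inner ?W V = inner (br U V) Z"
  proof
    fix V
    have "inner ?W V = (\<Sum>b\<in>Basis. inner (br U b) Z * inner b V)"
      by (simp add: inner_sum_left)
    also have "\<dots> = inner (br U (\<Sum>b\<in>Basis. inner V b *\<^sub>R b)) Z"
      by (simp add: B.sum_right B.scaleR_right inner_sum_left mult.commute inner_commute[of b V for b])
    also have "(\<Sum>b\<in>Basis. inner V b *\<^sub>R b) = V" by (rule euclidean_representation)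
    finally
    show "inner ?W V = inner (br U V) Z" .
  qed
  have "J br Z U = ?W" unfolding J_def
  proof (rule the_equality)
    show "\<forall>V. inner ?W V = inner (br U V) Z" by (rule ex)
    fix W assume "\<forall>V. inner W V = inner (br U V) Z"
    then have "\<forall>V. inner (W - ?W) V = 0" using ex by (simp add: inner_diff_left)
    then show "W = ?W" by (metis inner_eq_zero_iff right_minus_eq)
  qed
  then show ?thesis using ex by simp
qed

lemma vec_eqI: "(\<And>V. inner A V = inner B V) \<Longrightarrow> A = B"
  by (metis inner_diff_left inner_eq_zero_iff right_minus_eq)

lemma J_skew: "inner (J br Z U) V = - inner U (J br Z V)"
proof -
  have "inner U (J br Z V) = inner (J br Z V) U" by (rule inner_commute)
  also have "\<dots> = inner (br V U) Z" by (rule J_inner)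
  also have "\<dots> = - inner (br U V) Z" by (simp add: anti[of V U])
  finally show ?thesis by (simp add: J_inner)
qed

lemma J_add1: "J br (Z1 + Z2) U = J br Z1 U + J br Z2 U"
  by (rule vec_eqI) (simp add: J_inner inner_add_left inner_add_right)
lemma J_scale1: "J br (c *\<^sub>R Z) U = c *\<^sub>R J br Z U"
  by (rule vec_eqI) (simp add: J_inner)
lemma J_add2: "J br Z (U1 + U2) = J br Z U1 + J br Z U2"
  by (rule vec_eqI) (simp add: J_inner inner_add_left B.add_left)
lemma J_scale2: "J br Z (c *\<^sub>R U) = c *\<^sub>R J br Z U"
  by (rule vec_eqI) (simp add: J_inner B.scaleR_left)
lemma J_zero1[simp]: "J br 0 U = 0" by (rule vec_eqI) (simp add: J_inner)
lemma J_zero2[simp]: "J br Z 0 = 0" by (rule vec_eqI) (simp add: J_inner B.zero_left)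
lemma J_neg1: "J br (- Z) U = - J br Z U" using J_scale1[of "-1" Z U] by simp
lemma J_neg2: "J br Z (- U) = - J br Z U" using J_scale2[of Z "-1" U] by simp
lemma J_diff2: "J br Z (U1 - U2) = J br Z U1 - J br Z U2"
  using J_add2[of Z U1 "-U2"] J_neg2 by simp

lemma J_polar: "J br Z (J br C W) + J br C (J br Z W) = - (2 * inner Z C) *\<^sub>R W"
proof -
  have "J br (Z + C) (J br (Z + C) W) = - inner (Z + C) (Z + C) *\<^sub>R W" by (rule JJ)
  then have "J br Z (J br Z W) + J br Z (J br C W) + J br C (J br Z W) + J br C (J br C W)
     = - (inner Z Z + 2 * inner Z C + inner C C) *\<^sub>R W"
    by (simp add: J_add1 J_add2 inner_add_left inner_add_right inner_commute algebra_simps)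
  then have "J br C (J br Z W) + (J br Z (J br C W) + (2 * inner Z C) *\<^sub>R W) = 0"
    by (simp add: JJ algebra_simps)
  then show ?thesis by (simp add: eq_neg_iff_add_eq_0 add_ac)
qed

lemma J_cross: "inner (J br Z W) (J br C W) = inner Z C * inner W W"
proof -
  have "inner (J br Z W) (J br C W) = - inner W (J br Z (J br C W))" by (rule J_skew)
  also have "J br Z (J br C W) = - (2 * inner Z C) *\<^sub>R W - J br C (J br Z W)"
    using J_polar[of Z C W] by (simp add: algebra_simps)
  finally have "inner (J br Z W) (J br C W) = 2 * inner Z C * inner W W + inner W (J br C (J br Z W))"
    by (simp add: inner_diff_right)
  also have "inner W (J br C (J br Z W)) = - inner (J br C W) (J br Z W)"
    using J_skew[of C W "J br Z W"] by simp
  finally show ?thesis by (simp add: inner_commute)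
qed

lemma br_WJW: "br W (J br C W) = inner W W *\<^sub>R C"
proof (rule vec_eqI)
  fix V
  have h1: "inner (J br V W) (J br C W) = inner (br W (J br C W)) V" by (rule J_inner)
  have h2: "inner (J br V W) (J br C W) = inner V C * inner W W" by (rule J_cross)
  have h: "inner (br W (J br C W)) V = inner V C * inner W W" using h1 h2 by simp
  have r: "inner (inner W W *\<^sub>R C) V = inner V C * inner W W"
    by (simp add: inner_commute[of C V])
  show "inner (br W (J br C W)) V = inner (inner W W *\<^sub>R C) V"
    by (rule trans[OF h r[symmetric]])
qed

lemma J_norm: "inner (J br C W) (J br C W) = inner C C * inner W W"
  using J_cross[of C W C] .

lemma J_orth: "inner W (J br C W) = 0"
  using J_skew[of C W W] by (simp add: inner_commute)

end

definition Lf :: "('v::real_inner \<Rightarrow> 'v \<Rightarrow> 'z::real_inner) \<Rightarrow> ('v,'z) drpt \<Rightarrow> ('v,'z) drpt \<Rightarrow> ('v,'z) drpt" where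
  "Lf br p \<xi> = (fst \<xi>, exp (- fst p / 2) *\<^sub>R fst (snd \<xi>),
     exp (- fst p) *\<^sub>R (snd (snd \<xi>) - (1/2) *\<^sub>R br (fst (snd p)) (fst (snd \<xi>))))"

definition DLf :: "('v::real_inner \<Rightarrow> 'v \<Rightarrow> 'z::real_inner) \<Rightarrow> ('v,'z) drpt \<Rightarrow> ('v,'z) drpt \<Rightarrow> ('v,'z) drpt \<Rightarrow> ('v,'z) drpt" where
  "DLf br p \<delta> \<xi> = (0, (- fst \<delta> / 2) *\<^sub>R (exp (- fst p / 2) *\<^sub>R fst (snd \<xi>)),
     (- fst \<delta>) *\<^sub>R (exp (- fst p) *\<^sub>R (snd (snd \<xi>) - (1/2) *\<^sub>R br (fst (snd p)) (fst (snd \<xi>))))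
     - exp (- fst p) *\<^sub>R ((1/2) *\<^sub>R br (fst (snd \<delta>)) (fst (snd \<xi>))))"

context DRL begin

interpretation B: bounded_bilinear br by (rule bbil)

lemma exp_half: "exp (- t / 2) * exp (- t / 2) = exp (- (t::real))"
  by (simp add: exp_add[symmetric])

lemma mult_inv: "dr_mult br (dr_inv p) q = dr_inv p + Lf br p q"
proof -
  obtain t V Z where p: "p = (t, V, Z)" by (cases p) auto
  obtain t' V' Z' where q: "q = (t', V', Z')" by (cases q) auto
  have e: "exp (- (t / 2)) * exp (- (t / 2)) = exp (- t)" by (simp add: exp_add[symmetric])
  show ?thesis
    by (simp add: p q dr_mult_def dr_inv_def Lf_def B.scaleR_left B.scaleR_right B.minus_left
        algebra_simps e)
qed

lemma inv_mult_self: "dr_mult br (dr_inv p) p = dr_e"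
proof -
  obtain t V Z where p: "p = (t, V, Z)" by (cases p) auto
  show ?thesis unfolding mult_inv by (simp add: p dr_inv_def Lf_def dr_e_def)
qed

lemma Lf_linear: "linear (Lf br p)"
proof (rule linearI)
  fix x y :: "('v,'z) drpt" and c :: real
  show "Lf br p (x + y) = Lf br p x + Lf br p y"
    by (simp add: Lf_def B.add_right algebra_simps)
  show "Lf br p (c *\<^sub>R x) = c *\<^sub>R Lf br p x"
    by (simp add: Lf_def B.scaleR_right algebra_simps)
qed

lemma Lf_bl: "bounded_linear (Lf br p)"
  using Lf_linear linear_conv_bounded_linear by blast

lemma mult_inv_deriv: "(dr_mult br (dr_inv p) has_derivative Lf br p) (at q within S)"
proof -
  have "((\<lambda>q. Lf br p q + dr_inv p) has_derivative Lf br p) (at q within S)"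
    by (rule has_derivative_add_const) (rule bounded_linear.has_derivative[OF Lf_bl has_derivative_ident])
  moreover have "(\<lambda>q. Lf br p q + dr_inv p) = dr_mult br (dr_inv p)"
    by (rule ext) (simp add: mult_inv add.commute)
  ultimately show ?thesis by simp
qed

lemma frechet_Lf: "frechet_derivative (dr_mult br (dr_inv p)) (at p) = Lf br p"
  using frechet_derivative_at[OF mult_inv_deriv] by simp

lemma metric_eq: "dr_metric br p \<xi> \<zeta> = inner (Lf br p \<xi>) (Lf br p \<zeta>)"
  by (simp add: dr_metric_def frechet_Lf)

lemma Lf_deriv: "((\<lambda>p. Lf br p \<xi>) has_derivative (\<lambda>\<delta>. DLf br p \<delta> \<xi>)) (at p)"
  unfolding Lf_def DLf_def
  apply (rule derivative_eq_intros DERIV_compose_FDERIV[OF DERIV_exp] B.FDERIV | simp)+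
  apply (rule ext)
  apply (simp add: B.zero_right algebra_simps)
  done

end

definition Dtriv :: "('v::real_inner \<Rightarrow> 'v \<Rightarrow> 'z::real_inner) \<Rightarrow> ('v,'z) drpt \<Rightarrow> ('v,'z) drpt \<Rightarrow> ('v,'z) drpt" where
  "Dtriv br \<delta> \<xi> = (0, (- fst \<delta> / 2) *\<^sub>R fst (snd \<xi>),
     (- fst \<delta>) *\<^sub>R snd (snd \<xi>) - (1/2) *\<^sub>R br (fst (snd \<delta>)) (fst (snd \<xi>)))"

definition Dg :: "('v::real_inner \<Rightarrow> 'v \<Rightarrow> 'z::real_inner) \<Rightarrow> ('v,'z) drpt \<Rightarrow> ('v,'z) drpt \<Rightarrow> ('v,'z) drpt \<Rightarrow> real" where
  "Dg br d x z = inner (Dtriv br d x) z + inner x (Dtriv br d z)"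

definition Ghat :: "('v::real_inner \<Rightarrow> 'v \<Rightarrow> 'z::real_inner) \<Rightarrow> ('v,'z) drpt \<Rightarrow> ('v,'z) drpt \<Rightarrow> ('v,'z) drpt" where
  "Ghat br f h = ((1/2) * inner (fst (snd f)) (fst (snd h)) + inner (snd (snd f)) (snd (snd h)),
     - (1/2) *\<^sub>R (fst f *\<^sub>R fst (snd h) + fst h *\<^sub>R fst (snd f))
     - (1/2) *\<^sub>R (J br (snd (snd h)) (fst (snd f)) + J br (snd (snd f)) (fst (snd h))),
     - (fst f *\<^sub>R snd (snd h) + fst h *\<^sub>R snd (snd f)))"

context DRL begin

interpretation B: bounded_bilinear br by (rule bbil)

lemma DLf_triv: "DLf br p \<delta> \<xi> = Dtriv br (Lf br p \<delta>) (Lf br p \<xi>)"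
proof -
  have e: "exp (- (t / 2)) * exp (- (t / 2)) = exp (- t)" for t :: real by (simp add: exp_add[symmetric])
  show ?thesis by (simp add: DLf_def Dtriv_def Lf_def B.scaleR_left B.scaleR_right e)
qed

lemma metric_deriv: "((\<lambda>q. dr_metric br q \<xi> \<zeta>) has_derivative
   (\<lambda>\<delta>. Dg br (Lf br p \<delta>) (Lf br p \<xi>) (Lf br p \<zeta>))) (at p)"
proof -
  have "((\<lambda>q. inner (Lf br q \<xi>) (Lf br q \<zeta>)) has_derivative
   (\<lambda>\<delta>. inner (DLf br p \<delta> \<xi>) (Lf br p \<zeta>) + inner (Lf br p \<xi>) (DLf br p \<delta> \<zeta>))) (at p)"
    by (rule derivative_eq_intros Lf_deriv)+ (simp add: add.commute)
  then show ?thesis by (simp add: metric_eq DLf_triv Dg_def)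
qed

lemma frechet_metric: "frechet_derivative (\<lambda>q. dr_metric br q \<xi> \<zeta>) (at p) \<delta>
   = Dg br (Lf br p \<delta>) (Lf br p \<xi>) (Lf br p \<zeta>)"
  using frechet_derivative_at[OF metric_deriv] by metis

lemma Ghat_prop: "inner (Ghat br f h) \<eta> = (Dg br f h \<eta> + Dg br h f \<eta> - Dg br \<eta> f h) / 2"
proof -
  obtain a1 W1 Y1 where f: "f = (a1, W1, Y1)" by (cases f) auto
  obtain a2 W2 Y2 where h: "h = (a2, W2, Y2)" by (cases h) auto
  obtain a3 W3 Y3 where e: "\<eta> = (a3, W3, Y3)" by (cases \<eta>) auto
  have j1: "inner (J br Y2 W1) W3 = inner (br W1 W3) Y2" by (rule J_inner)
  have j2: "inner (J br Y1 W2) W3 = inner (br W2 W3) Y1" by (rule J_inner)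
  have a1: "br W3 W1 = - br W1 W3" by (rule anti)
  have a2: "br W3 W2 = - br W2 W3" by (rule anti)
  have a3: "br W2 W1 = - br W1 W2" by (rule anti)
  show ?thesis
    apply (simp add: f h e Ghat_def Dg_def Dtriv_def inner_add_left inner_add_right inner_diff_left
        inner_diff_right j1 j2 a1 a2 a3 B.scaleR_left B.scaleR_right
        inner_commute[of Y2 "br W1 W3"] inner_commute[of Y1 "br W2 W3"] algebra_simps)
    done
qed

lemma Lf_inj: "Lf br p x = 0 \<Longrightarrow> x = 0"
proof -
  assume h: "Lf br p x = 0"
  obtain a W Y where x: "x = (a, W, Y)" by (cases x) auto
  from h have "a = 0" "W = 0" by (simp_all add: Lf_def x zero_prod_def)
  with h show ?thesis by (simp add: Lf_def x B.zero_right zero_prod_def)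
qed

lemma Gamma_eq:
  assumes "Lf br p c = Ghat br (Lf br p u) (Lf br p w)"
  shows "dr_Gamma br p u w = c"
  unfolding dr_Gamma_def
proof (rule the_equality)
  show "\<forall>y. dr_metric br p c y =
      (frechet_derivative (\<lambda>q. dr_metric br q w y) (at p) u
     + frechet_derivative (\<lambda>q. dr_metric br q u y) (at p) w
     - frechet_derivative (\<lambda>q. dr_metric br q u w) (at p) y) / 2"
    by (simp only: frechet_metric) (simp add: metric_eq assms Ghat_prop)
  fix c' assume h: "\<forall>y. dr_metric br p c' y =
      (frechet_derivative (\<lambda>q. dr_metric br q w y) (at p) u
     + frechet_derivative (\<lambda>q. dr_metric br q u y) (at p) w
     - frechet_derivative (\<lambda>q. dr_metric br q u w) (at p) y) / 2"
  have "\<forall>y. inner (Lf br p c') (Lf br p y) = inner (Lf br p c) (Lf br p y)"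
    using h by (simp only: frechet_metric) (simp add: metric_eq assms Ghat_prop)
  then have "inner (Lf br p c') (Lf br p (c' - c)) = inner (Lf br p c) (Lf br p (c' - c))" by blast
  then have "inner (Lf br p c' - Lf br p c) (Lf br p (c' - c)) = 0"
    by (simp only: inner_diff_left)
  then have "inner (Lf br p (c' - c)) (Lf br p (c' - c)) = 0"
    by (simp only: linear_diff[OF Lf_linear])
  then have "Lf br p (c' - c) = 0" by simp
  then have "c' - c = 0" by (rule Lf_inj)
  then show "c' = c" by simp
qed

end

definition Kf :: "('v::real_inner \<Rightarrow> 'v \<Rightarrow> 'z::real_inner) \<Rightarrow> ('v,'z) drpt \<Rightarrow> ('v,'z) drpt \<Rightarrow> ('v,'z) drpt" where
  "Kf br p \<delta> = (fst \<delta>, fst (snd \<delta>) + (fst \<delta> / 2) *\<^sub>R fst (snd p),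
     snd (snd \<delta>) + fst \<delta> *\<^sub>R snd (snd p) + (1/2) *\<^sub>R br (fst (snd \<delta>)) (fst (snd p)))"

context DRL begin

interpretation B: bounded_bilinear br by (rule bbil)

lemma dr_mult_alt: "dr_mult br q p = (fst q + fst p, fst (snd q) + exp (fst q / 2) *\<^sub>R fst (snd p),
   snd (snd q) + exp (fst q) *\<^sub>R snd (snd p) + (1/2) *\<^sub>R br (fst (snd q)) (exp (fst q / 2) *\<^sub>R fst (snd p)))"
  by (cases q, cases p) (simp add: dr_mult_def)

lemma killing_deriv: "((\<lambda>q. dr_mult br q p) has_derivative Kf br p) (at dr_e)"
  unfolding dr_mult_alt Kf_def dr_e_def
  apply (rule derivative_eq_intros DERIV_compose_FDERIV[OF DERIV_exp] B.FDERIV | simp)+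
  apply (rule ext)
  apply (simp add: B.zero_left B.scaleR_right algebra_simps)
  done

lemma killing_eq: "dr_killing br Y p = Kf br p Y"
  unfolding dr_killing_def using frechet_derivative_at[OF killing_deriv] by metis

lemma Lf_e: "Lf br dr_e x = x"
  by (simp add: Lf_def dr_e_def B.zero_left)

lemma Gamma_e: "dr_Gamma br dr_e u w = Ghat br u w"
  by (rule Gamma_eq) (simp add: Lf_e)

end


context DRL begin

interpretation B: bounded_bilinear br by (rule bbil)

lemma br_span: "br (a *\<^sub>R W + b *\<^sub>R J br C W) (x *\<^sub>R W + y *\<^sub>R J br C W)
   = ((a*y - b*x) * inner W W) *\<^sub>R C"
proof -
  have "br (J br C W) W = - (inner W W *\<^sub>R C)" using anti[of "J br C W" W] br_WJW by simp
  then show ?thesis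
    by (simp add: B.add_left B.add_right B.scaleR_left B.scaleR_right br_WJW algebra_simps)
qed

lemma Lf_span: "Lf br (t0, a *\<^sub>R W + b *\<^sub>R J br C W, c0 *\<^sub>R C) (d, x *\<^sub>R W + y *\<^sub>R J br C W, z *\<^sub>R C)
  = (d, (exp (- t0 / 2) * x) *\<^sub>R W + (exp (- t0 / 2) * y) *\<^sub>R J br C W,
       (exp (- t0) * (z - (1/2) * ((a*y - b*x) * inner W W))) *\<^sub>R C)"
  by (simp add: Lf_def br_span algebra_simps)

lemma triple_eq: "a = a' \<Longrightarrow> b1 = b1' \<Longrightarrow> b2 = b2' \<Longrightarrow> c = c' \<Longrightarrow>
   (a, b1 *\<^sub>R W + b2 *\<^sub>R JW, c *\<^sub>R C) = (a', b1' *\<^sub>R W + b2' *\<^sub>R JW, c' *\<^sub>R C)"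
  by simp

lemma Ghat_span: "Ghat br (d, x *\<^sub>R W + y *\<^sub>R J br C W, z *\<^sub>R C) (d, x *\<^sub>R W + y *\<^sub>R J br C W, z *\<^sub>R C)
  = ((1/2) * (inner W W * (x*x + inner C C * (y*y))) + z*z * inner C C,
     (- d * x + z * y * inner C C) *\<^sub>R W + (- d * y - z * x) *\<^sub>R J br C W,
     (- 2 * d * z) *\<^sub>R C)"
proof -
  have jn: "inner (J br C W) (J br C W) = inner C C * inner W W" by (rule J_norm)
  have jo: "inner W (J br C W) = 0" by (rule J_orth)
  have jo2: "inner (J br C W) W = 0" using jo by (simp add: inner_commute)
  have jj: "J br C (J br C W) = - inner C C *\<^sub>R W" by (rule JJ)
  have jv: "J br (z *\<^sub>R C) (x *\<^sub>R W + y *\<^sub>R J br C W) = (- z * y * inner C C) *\<^sub>R W + (z * x) *\<^sub>R J br C W"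
    by (simp add: J_add2 J_scale1 J_scale2 jj ac_simps)
  have c1: "(1/2) * inner (x *\<^sub>R W + y *\<^sub>R J br C W) (x *\<^sub>R W + y *\<^sub>R J br C W) + inner (z *\<^sub>R C) (z *\<^sub>R C)
     = (1/2) * (inner W W * (x*x + inner C C * (y*y))) + z*z * inner C C"
    by (simp add: inner_add_left inner_add_right jn jo jo2 algebra_simps)
  have c2: "- (1/2) *\<^sub>R (d *\<^sub>R (x *\<^sub>R W + y *\<^sub>R J br C W) + d *\<^sub>R (x *\<^sub>R W + y *\<^sub>R J br C W))
     - (1/2) *\<^sub>R (J br (z *\<^sub>R C) (x *\<^sub>R W + y *\<^sub>R J br C W) + J br (z *\<^sub>R C) (x *\<^sub>R W + y *\<^sub>R J br C W))
     = (- d * x + z * y * inner C C) *\<^sub>R W + (- d * y - z * x) *\<^sub>R J br C W"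
  proof -
    have h1: "(- (1/2::real)) *\<^sub>R (a + a) = - a" for a :: 'v by (simp add: scaleR_2[symmetric])
    have h2: "(1/2::real) *\<^sub>R (a + a) = a" for a :: 'v by (simp add: scaleR_2[symmetric])
    show ?thesis unfolding h1 h2 jv by (simp add: algebra_simps)
  qed
  have c3: "- (d *\<^sub>R (z *\<^sub>R C) + d *\<^sub>R (z *\<^sub>R C)) = (- 2 * d * z) *\<^sub>R C"
    by (simp add: scaleR_add_left[symmetric])
  show ?thesis unfolding Ghat_def fst_conv snd_conv c1 c2 c3 ..
qed

lemma vd_scale: "(f has_real_derivative f') (at s) \<Longrightarrow> ((\<lambda>s. f s *\<^sub>R X) has_vector_derivative f' *\<^sub>R X) (at s)"
  unfolding has_real_derivative_iff_has_vector_derivative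
  by (rule bounded_linear.has_vector_derivative[OF bounded_linear_scaleR_left])

lemma vd_curve:
  assumes "(f0 has_real_derivative a0) (at s)" "(f1 has_real_derivative a1) (at s)"
    "(f2 has_real_derivative a2) (at s)" "(f3 has_real_derivative a3) (at s)"
  shows "((\<lambda>s. (f0 s, f1 s *\<^sub>R W + f2 s *\<^sub>R JW, f3 s *\<^sub>R C)) has_vector_derivative
     (a0, a1 *\<^sub>R W + a2 *\<^sub>R JW, a3 *\<^sub>R C)) (at s)"
  using assms(1) unfolding has_real_derivative_iff_has_vector_derivative
  by (intro has_vector_derivative_Pair has_vector_derivative_add vd_scale assms)

lemma geo_J:
  fixes \<Sigma> :: "('v,'z) drpt set"
  assumes sub_v: "subspace v'" and sub_z: "subspace z'"
    and Sigma_grp: "dr_subgroup br \<Sigma>"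
    and Sigma_tg: "dr_totally_geodesic br \<Sigma>"
    and Sigma_tan: "tangent_set \<Sigma> dr_e = {(a, V, Z) | a V Z. V \<in> v' \<and> Z \<in> z'}"
    and W: "W \<in> v'" and C: "C \<in> z'" and nrm: "inner W W + inner C C = 1"
  shows "J br C W \<in> v'"
proof -
  define k where "k = inner C C"
  have k0: "0 \<le> k" unfolding k_def by simp
  have n: "inner W W = 1 - k" using nrm unfolding k_def by simp
  define JW where "JW = J br C W"
  define \<gamma> where "\<gamma> = (\<lambda>s. (- ln (gw k s), gal k s *\<^sub>R W + gbe k s *\<^sub>R JW, gal k s *\<^sub>R C))"
  define \<gamma>' where "\<gamma>' = (\<lambda>s. (gT1 k s, gA1 k s *\<^sub>R W + gB1 k s *\<^sub>R JW, gA1 k s *\<^sub>R C))"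
  define \<gamma>'' where "\<gamma>'' = (\<lambda>s. (gT2 k s, gA2 k s *\<^sub>R W + gB2 k s *\<^sub>R JW, gA2 k s *\<^sub>R C))"
  have d1: "(\<gamma> has_vector_derivative \<gamma>' s) (at s)" for s
    unfolding \<gamma>_def \<gamma>'_def
    by (rule vd_curve[OF d_t[OF k0] d_al[OF k0] d_be[OF k0] d_al[OF k0]])
  have d2: "(\<gamma>' has_vector_derivative \<gamma>'' s) (at s)" for s
    unfolding \<gamma>'_def \<gamma>''_def
    by (rule vd_curve[OF d_T1[OF k0] d_A1[OF k0] d_B1[OF k0] d_A1[OF k0]])
  have Gam: "dr_Gamma br (\<gamma> s) (\<gamma>' s) (\<gamma>' s) = - \<gamma>'' s" for s
  proof (rule Gamma_eq)
    have p: "gw k s > 0" using gw_pos[OF k0, of s] by simp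
    define E where "E = exp (ln (gw k s) / 2)"
    have EE: "E * E = gw k s" unfolding E_def using p by (simp add: exp_add[symmetric])
    have e1: "exp (- (- ln (gw k s)) / 2) = E" unfolding E_def by simp
    have e2: "exp (- (- ln (gw k s))) = gw k s" using p by simp
    have m: "- \<gamma>'' s = (- gT2 k s, (- gA2 k s) *\<^sub>R W + (- gB2 k s) *\<^sub>R JW, (- gA2 k s) *\<^sub>R C)"
      unfolding \<gamma>''_def by simp
    have z1: "exp (- (- ln (gw k s))) * (gA1 k s - 1/2 * ((gal k s * gB1 k s - gbe k s * gA1 k s) * inner W W))
        = 1 / gw k s" unfolding e2 n using Zid[OF k0, of s] by (simp only: mult.assoc)
    have z2: "exp (- (- ln (gw k s))) * (- gA2 k s - 1/2 * ((gal k s * (- gB2 k s) - gbe k s * (- gA2 k s)) * inner W W))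
        = - (2 * gT1 k s / gw k s)"
    proof -
      have "gw k s * (- gA2 k s - 1/2 * ((gal k s * (- gB2 k s) - gbe k s * (- gA2 k s)) * (1 - k)))
        = - (gw k s * (gA2 k s - (1/2) * (gal k s * gB2 k s - gbe k s * gA2 k s) * (1-k)))"
        by algebra
      then show ?thesis unfolding e2 n using I4[OF k0, of s] by simp
    qed
    have L1: "Lf br (\<gamma> s) (\<gamma>' s) = (gT1 k s, (E * gA1 k s) *\<^sub>R W + (E * gB1 k s) *\<^sub>R J br C W, (1 / gw k s) *\<^sub>R C)"
      unfolding \<gamma>_def \<gamma>'_def JW_def Lf_span
      by (rule triple_eq) (simp_all only: e1 z1)
    have L2: "Lf br (\<gamma> s) (- \<gamma>'' s) = (- gT2 k s, (- E * gA2 k s) *\<^sub>R W + (- E * gB2 k s) *\<^sub>R J br C W,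
        (- (2 * gT1 k s / gw k s)) *\<^sub>R C)"
      unfolding m unfolding \<gamma>_def JW_def Lf_span
      apply (rule triple_eq)
      apply (simp_all only: e1 z2)
      done
    have G: "Ghat br (Lf br (\<gamma> s) (\<gamma>' s)) (Lf br (\<gamma> s) (\<gamma>' s)) =
       ((1/2) * (inner W W * ((E * gA1 k s) * (E * gA1 k s) + inner C C * ((E * gB1 k s) * (E * gB1 k s)))) + (1 / gw k s) * (1 / gw k s) * inner C C,
        (- gT1 k s * (E * gA1 k s) + (1 / gw k s) * (E * gB1 k s) * inner C C) *\<^sub>R W
          + (- gT1 k s * (E * gB1 k s) - (1 / gw k s) * (E * gA1 k s)) *\<^sub>R J br C W,
        (- 2 * gT1 k s * (1 / gw k s)) *\<^sub>R C)"
      unfolding L1 by (rule Ghat_span)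
    show "Lf br (\<gamma> s) (- \<gamma>'' s) = Ghat br (Lf br (\<gamma> s) (\<gamma>' s)) (Lf br (\<gamma> s) (\<gamma>' s))"
      unfolding L2 G
    proof (rule triple_eq)
      have fa: "(E * gA1 k s) * (E * gA1 k s) = gw k s * (gA1 k s * gA1 k s)"
        by (simp add: EE[symmetric] ac_simps)
      have fb: "(E * gB1 k s) * (E * gB1 k s) = gw k s * (gB1 k s * gB1 k s)"
        by (simp add: EE[symmetric] ac_simps)
      show "- gT2 k s = (1/2) * (inner W W * ((E * gA1 k s) * (E * gA1 k s) + inner C C * ((E * gB1 k s) * (E * gB1 k s)))) + (1 / gw k s) * (1 / gw k s) * inner C C"
      proof -
        have r: "1 / gw k s * (1 / gw k s) * k = k / (gw k s)^2" by (simp add: power2_eq_square)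
        have r2: "1 / 2 * ((1 - k) * (gw k s * (gA1 k s * gA1 k s) + k * (gw k s * (gB1 k s * gB1 k s))))
           = 1/2 * (1-k) * gw k s * ((gA1 k s)^2 + k * (gB1 k s)^2)" unfolding power2_eq_square by algebra
        show ?thesis unfolding fa fb n k_def[symmetric] r r2 by (rule I1[OF k0])
      qed
      show "- E * gA2 k s = - gT1 k s * (E * gA1 k s) + (1 / gw k s) * (E * gB1 k s) * inner C C"
        unfolding I2[OF k0, of s] k_def[symmetric] using p by (simp add: field_simps)
      show "- E * gB2 k s = - gT1 k s * (E * gB1 k s) - (1 / gw k s) * (E * gA1 k s)"
        unfolding I3[OF k0, of s] using p by (simp add: field_simps)
      show "- (2 * gT1 k s / gw k s) = - 2 * gT1 k s * (1 / gw k s)" by simp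
    qed
  qed
  have geo: "dr_geodesic br \<gamma> \<gamma>'"
    unfolding dr_geodesic_def using d1 d2 Gam by simp
  have g0: "\<gamma> 0 = dr_e" unfolding \<gamma>_def dr_e_def by (simp add: gw_def gal_def gbe_def)
  have g'0: "\<gamma>' 0 = (0, W, C)" unfolding \<gamma>'_def by (simp add: gw_def gT1_def gA1_def gB1_def)
  have e_in: "dr_e \<in> \<Sigma>" using Sigma_grp unfolding dr_subgroup_def by blast
  have t0: "\<gamma>' 0 \<in> tangent_set \<Sigma> (\<gamma> 0)" unfolding g'0 g0 Sigma_tan using W C by blast
  have inS: "\<gamma> s \<in> \<Sigma>" for s
    using Sigma_tg geo e_in t0 g0 unfolding dr_totally_geodesic_def by metis
  define p where "p = \<gamma> 1"
  define c where "c = (\<lambda>r. dr_mult br (dr_inv p) (\<gamma> (1 + r)))"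
  have cS: "c r \<in> \<Sigma>" for r
    using Sigma_grp inS unfolding c_def p_def dr_subgroup_def by blast
  have c0: "c 0 = dr_e" unfolding c_def p_def by (simp add: inv_mult_self)
  have sh: "((\<lambda>r. \<gamma> (1 + r)) has_vector_derivative \<gamma>' 1) (at 0)"
  proof -
    have "((\<lambda>r. 1 + r) has_vector_derivative 1) (at (0::real))"
      by (rule derivative_eq_intros refl | simp)+
    from vector_diff_chain_at[OF this, of \<gamma> "\<gamma>' 1"] d1[of 1]
    show ?thesis by (simp add: o_def)
  qed
  have cd: "(c has_vector_derivative Lf br p (\<gamma>' 1)) (at 0)"
  proof -
    have "((\<lambda>r. Lf br p (\<gamma> (1 + r)) + dr_inv p) has_vector_derivative Lf br p (\<gamma>' 1)) (at 0)"
      unfolding has_vector_derivative_add_const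
      by (rule bounded_linear.has_vector_derivative[OF Lf_bl sh])
    moreover have "c = (\<lambda>r. Lf br p (\<gamma> (1 + r)) + dr_inv p)"
      unfolding c_def by (simp add: mult_inv add.commute)
    ultimately show ?thesis by simp
  qed
  have "Lf br p (\<gamma>' 1) \<in> tangent_set \<Sigma> dr_e"
    unfolding tangent_set_def using cS c0 cd by blast
  then have inv: "fst (snd (Lf br p (\<gamma>' 1))) \<in> v'" unfolding Sigma_tan by auto
  define E where "E = exp (- fst p / 2)"
  have Epos: "E > 0" unfolding E_def by simp
  have "fst (snd (Lf br p (\<gamma>' 1))) = E *\<^sub>R (gA1 k 1 *\<^sub>R W + gB1 k 1 *\<^sub>R JW)"
    unfolding Lf_def E_def \<gamma>'_def by simp
  with inv have "E *\<^sub>R (gA1 k 1 *\<^sub>R W + gB1 k 1 *\<^sub>R JW) \<in> v'" by simp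
  then have "(1 / E) *\<^sub>R (E *\<^sub>R (gA1 k 1 *\<^sub>R W + gB1 k 1 *\<^sub>R JW)) \<in> v'"
    using sub_v by (rule subspace_scale[rotated])
  then have "gA1 k 1 *\<^sub>R W + gB1 k 1 *\<^sub>R JW \<in> v'" using Epos by simp
  moreover have "gA1 k 1 *\<^sub>R W \<in> v'" using sub_v W by (rule subspace_scale)
  ultimately have "(gA1 k 1 *\<^sub>R W + gB1 k 1 *\<^sub>R JW) - gA1 k 1 *\<^sub>R W \<in> v'"
    using sub_v by (intro subspace_diff) auto
  then have i: "gB1 k 1 *\<^sub>R JW \<in> v'" by simp
  have nz: "gB1 k 1 \<noteq> 0" unfolding gB1_def using gw_pos[OF k0, of 1] by simp
  have "(1 / gB1 k 1) *\<^sub>R (gB1 k 1 *\<^sub>R JW) \<in> v'" using sub_v i by (rule subspace_scale)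
  then show ?thesis using nz unfolding JW_def by simp
qed

end

lemma tg_J2:
  fixes br :: "'v::euclidean_space \<Rightarrow> 'v \<Rightarrow> 'z::euclidean_space"
    and \<Sigma> :: "('v,'z) drpt set"
  assumes DR: "damek_ricci br"
    and sub_v: "subspace v'" and sub_z: "subspace z'"
    and Sigma_grp: "dr_subgroup br \<Sigma>"
    and Sigma_tg: "dr_totally_geodesic br \<Sigma>"
    and Sigma_tan: "tangent_set \<Sigma> dr_e = {(a, V, Z) | a V Z. V \<in> v' \<and> Z \<in> z'}"
    and W: "W \<in> v'" and C: "C \<in> z'"
  shows "J br C W \<in> v'"
proof -
  interpret DRL br by unfold_locales (rule DR)
  show ?thesis
  proof (cases "W = 0 \<or> C = 0")
    case True
    then show ?thesis using sub_v by (auto simp: subspace_0)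
  next
    case False
    then have nW: "norm W > 0" and nC: "norm C > 0" by auto
    define a where "a = sqrt 3 / 2 / norm W"
    define b where "b = 1 / (2 * norm C)"
    have a0: "a \<noteq> 0" and b0: "b \<noteq> 0" unfolding a_def b_def using nW nC by auto
    have W1: "a *\<^sub>R W \<in> v'" using sub_v W by (rule subspace_scale)
    have C1: "b *\<^sub>R C \<in> z'" using sub_z C by (rule subspace_scale)
    have iW: "inner (a *\<^sub>R W) (a *\<^sub>R W) = 3/4"
    proof -
      have "inner (a *\<^sub>R W) (a *\<^sub>R W) = a * a * (norm W)^2" by (simp add: power2_norm_eq_inner)
      also have "\<dots> = 3/4" unfolding a_def using nW by (simp add: field_simps power2_eq_square)
      finally show ?thesis .
    qed
    have iC: "inner (b *\<^sub>R C) (b *\<^sub>R C) = 1/4"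
    proof -
      have "inner (b *\<^sub>R C) (b *\<^sub>R C) = b * b * (norm C)^2" by (simp add: power2_norm_eq_inner)
      also have "\<dots> = 1/4" unfolding b_def using nC by (simp add: field_simps power2_eq_square)
      finally show ?thesis .
    qed
    have s1: "inner (a *\<^sub>R W) (a *\<^sub>R W) + inner (b *\<^sub>R C) (b *\<^sub>R C) = 1"
      unfolding iW iC by simp
    have "J br (b *\<^sub>R C) (a *\<^sub>R W) \<in> v'"
      by (rule geo_J[OF sub_v sub_z Sigma_grp Sigma_tg Sigma_tan W1 C1 s1])
    then have "(b * a) *\<^sub>R J br C W \<in> v'" by (simp add: J_scale1 J_scale2 mult.commute)
    then have i: "(b * a) *\<^sub>R J br C W \<in> v'" .
    have "(1 / (b * a)) *\<^sub>R ((b * a) *\<^sub>R J br C W) \<in> v'" using sub_v i by (rule subspace_scale)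
    then show ?thesis using a0 b0 by simp
  qed
qed

theorem lemma3p3:
  fixes br :: "'v::euclidean_space \<Rightarrow> 'v \<Rightarrow> 'z::euclidean_space"
    and \<Sigma> H :: "('v,'z) drpt set"
    and v' :: "'v set" and z' :: "'z set"
    and Y :: "('v,'z) drpt" and U :: 'v and X :: 'z
  assumes DR: "damek_ricci br"
    and sub_v: "subspace v'" and sub_z: "subspace z'"
    and Sigma_grp: "dr_subgroup br \<Sigma>"
    and Sigma_tg: "dr_totally_geodesic br \<Sigma>"
    and Sigma_tan: "tangent_set \<Sigma> dr_e = {(a, V, Z) | a V Z. V \<in> v' \<and> Z \<in> z'}"
    and H_grp: "dr_subgroup br H" and H_closed: "closed H"
    and h_orth: "\<forall>W1\<in>tangent_set H dr_e. \<forall>W2\<in>tangent_set \<Sigma> dr_e. inner W1 W2 = 0"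
    and Y_h: "Y \<in> tangent_set H dr_e"
    and eta_e: "dr_killing br Y dr_e = (0, U, X)"
  shows "(\<forall>v\<in>tangent_set \<Sigma> dr_e. \<forall>w\<in>tangent_set \<Sigma> dr_e.
            inner (dr_cov br dr_e v (dr_killing br Y)) w = 0)
     \<longleftrightarrow> (\<forall>u\<in>v'. \<forall>w\<in>v'. inner (J br X u) w = 0)"
proof -
  interpret DRL br by unfold_locales (rule DR)
  interpret B: bounded_bilinear br by (rule bbil)
  have Yeq: "Y = (0, U, X)" using eta_e by (cases Y) (simp add: killing_eq Kf_def dr_e_def B.zero_right)
  have eta: "dr_killing br Y = (\<lambda>p. (0, U, X + (1/2) *\<^sub>R br U (fst (snd p))))"
    by (rule ext) (simp add: killing_eq Kf_def Yeq)
  have eta_d: "(dr_killing br Y has_derivative (\<lambda>\<delta>. (0, 0, (1/2) *\<^sub>R br U (fst (snd \<delta>))))) (at dr_e)"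
    unfolding eta
    apply (rule derivative_eq_intros B.FDERIV | simp)+
    apply (rule ext)
    apply (simp add: B.zero_left B.zero_right)
    done
  have fd: "frechet_derivative (dr_killing br Y) (at dr_e) = (\<lambda>\<delta>. (0, 0, (1/2) *\<^sub>R br U (fst (snd \<delta>))))"
    using frechet_derivative_at[OF eta_d] by simp
  have etae: "dr_killing br Y dr_e = (0, U, X)" by (rule eta_e)
  have orthV: "inner U W = 0" if "W \<in> v'" for W
  proof -
    have "(0, W, 0) \<in> tangent_set \<Sigma> dr_e" using Sigma_tan that sub_z by (auto simp: subspace_0)
    then have "inner Y (0, W, 0) = 0" using h_orth Y_h by blast
    then show ?thesis by (simp add: Yeq)
  qed
  have orthZ: "inner X Z = 0" if "Z \<in> z'" for Z
  proof -
    have "(0, 0, Z) \<in> tangent_set \<Sigma> dr_e" using Sigma_tan that sub_v by (auto simp: subspace_0)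
    then have "inner Y (0, 0, Z) = 0" using h_orth Y_h by blast
    then show ?thesis by (simp add: Yeq)
  qed
  have JV: "J br C W \<in> v'" if "W \<in> v'" "C \<in> z'" for W C
    by (rule tg_J2[OF DR sub_v sub_z Sigma_grp Sigma_tg Sigma_tan that])
  have key: "inner (dr_cov br dr_e v (dr_killing br Y)) w = - (1/2) * inner (J br X (fst (snd v))) (fst (snd w))"
    if v: "v \<in> tangent_set \<Sigma> dr_e" and w: "w \<in> tangent_set \<Sigma> dr_e" for v w
  proof -
    obtain a1 W1 Y1 where vv: "v = (a1, W1, Y1)" "W1 \<in> v'" "Y1 \<in> z'" using v Sigma_tan by auto
    obtain a3 W3 Y3 where ww: "w = (a3, W3, Y3)" "W3 \<in> v'" "Y3 \<in> z'" using w Sigma_tan by auto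
    have o1: "inner U W1 = 0" "inner U W3 = 0" "inner X Y1 = 0" "inner X Y3 = 0"
      using orthV orthZ vv ww by auto
    have o2: "inner (J br Y1 U) W3 = 0"
      using J_skew[of Y1 U W3] orthV[OF JV[OF ww(2) vv(3)]] by simp
    have o3: "inner (br U W1) Y3 = 0"
      using J_inner[of Y3 U W1] J_skew[of Y3 U W1] orthV[OF JV[OF vv(2) ww(3)]] by simp
    show ?thesis
      unfolding dr_cov_def fd etae Gamma_e
      by (simp add: vv ww Ghat_def inner_add_left inner_diff_left o1 o2 o3
          inner_commute[of W1 U] inner_commute[of Y1 X] inner_commute[of Y3 "br U W1"] algebra_simps)
  qed
  show ?thesis
  proof
    assume h: "\<forall>v\<in>tangent_set \<Sigma> dr_e. \<forall>w\<in>tangent_set \<Sigma> dr_e.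
            inner (dr_cov br dr_e v (dr_killing br Y)) w = 0"
    show "\<forall>u\<in>v'. \<forall>w\<in>v'. inner (J br X u) w = 0"
    proof (intro ballI)
      fix u w assume "u \<in> v'" "w \<in> v'"
      then have t: "(0, u, 0) \<in> tangent_set \<Sigma> dr_e" "(0, w, 0) \<in> tangent_set \<Sigma> dr_e"
        using Sigma_tan sub_z by (auto simp: subspace_0)
      show "inner (J br X u) w = 0" using h t key[OF t] by fastforce
    qed
  next
    assume h: "\<forall>u\<in>v'. \<forall>w\<in>v'. inner (J br X u) w = 0"
    show "\<forall>v\<in>tangent_set \<Sigma> dr_e. \<forall>w\<in>tangent_set \<Sigma> dr_e.
            inner (dr_cov br dr_e v (dr_killing br Y)) w = 0"
    proof (intro ballI)
      fix v w assume vw: "v \<in> tangent_set \<Sigma> dr_e" "w \<in> tangent_set \<Sigma> dr_e"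
      then have "fst (snd v) \<in> v'" "fst (snd w) \<in> v'" using Sigma_tan by auto
      then show "inner (dr_cov br dr_e v (dr_killing br Y)) w = 0" using key[OF vw] h by simp
    qed
  qed
qed

end
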